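(* Let $G$ be a finite group, let $\alpha$ be an automorphism of $G$, and let $r>1$ and $s>1$ be coprime integers. For $x\in G$ and a positive integer $d$ put $N_d(x)=x\,\alpha(x)\,\alpha^2(x)\cdots\alpha^{d-1}(x)$. For a positive integer $m$ and $u,v\in G$, write $u\approx_m v$ if there is $z\in G$ with $v=z^{-1}u\,\alpha^m(z)$. Suppose $x,y\in G$ satisfy $N_r(x)\approx_r N_r(y)$ and $N_s(x)\approx_s N_s(y)$, but $N_d(x)\not\approx_d N_d(y)$ for every proper divisor $d$ of $r$ and every proper divisor $d$ of $s$. Then $|G|$ is divisible by $rs$ and $|G|\neq rs$. Furthermore, if $rs\equiv 2\pmod 4$, then $|G|$ is divisible by $2rs$.
   Context: A proper divisor of a positive integer $n$ is a positive divisor of $n$ strictly less than $n$ (so $1$ is a proper divisor of every $n>1$). The relation $\approx_m$ is the equivalence relation describing cohomologous cocycles in $H^1(\hat{\mathbb{Z}},G)$ when $1\in\hat{\mathbb{Z}}$ acts on $G$ via $\alpha^m$, cocycles being identified with their value at $1$. *)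

theory Defs
  imports "HOL-Algebra.Algebra"
begin

fun twisted_norm :: "('g, 'b) monoid_scheme \<Rightarrow> ('g \<Rightarrow> 'g) \<Rightarrow> nat \<Rightarrow> 'g \<Rightarrow> 'g" where
  "twisted_norm G \<alpha> 0 x = \<one>\<^bsub>G\<^esub>"
| "twisted_norm G \<alpha> (Suc d) x = twisted_norm G \<alpha> d x \<otimes>\<^bsub>G\<^esub> (\<alpha> ^^ d) x"

definition twisted_conj :: "('g, 'b) monoid_scheme \<Rightarrow> ('g \<Rightarrow> 'g) \<Rightarrow> nat \<Rightarrow> 'g \<Rightarrow> 'g \<Rightarrow> bool" where
  "twisted_conj G \<alpha> m u v \<longleftrightarrow>
     (\<exists>z \<in> carrier G. v = inv\<^bsub>G\<^esub> z \<otimes>\<^bsub>G\<^esub> u \<otimes>\<^bsub>G\<^esub> (\<alpha> ^^ m) z)"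

end

theory Submission
  imports Defs "HOL-Combinatorics.Permutations"
begin

lemma fix_mult: "(f ^^ a) g = g \<Longrightarrow> (f ^^ (a * n)) g = g"
  by (induction n) (simp_all add: funpow_add)

lemma fix_gcd:
  assumes "(f ^^ a) g = g" "(f ^^ b) g = g"
  shows "(f ^^ (gcd a b)) g = g"
proof (cases "a = 0")
  case True then show ?thesis using assms by simp
next
  case False
  then obtain u v where uv: "a * u = b * v + gcd a b" using bezout_nat by blast
  have "g = (f ^^ (a * u)) g" using fix_mult[OF assms(1)] by simp
  also have "\<dots> = (f ^^ gcd a b) ((f ^^ (b * v)) g)" by (simp add: uv funpow_add add.commute)
  also have "\<dots> = (f ^^ gcd a b) g" using fix_mult[OF assms(2)] by simp
  finally show ?thesis by simp
qed

lemma funpow_in: "f ` W \<subseteq> W \<Longrightarrow> g \<in> W \<Longrightarrow> (f ^^ k) g \<in> W"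
  by (induction k) auto

lemma orbit_dvd:
  assumes "finite W" "f ` W \<subseteq> W" "0 < n"
    "\<And>g. g \<in> W \<Longrightarrow> (f ^^ n) g = g"
    "\<And>g k. g \<in> W \<Longrightarrow> 0 < k \<Longrightarrow> k < n \<Longrightarrow> (f ^^ k) g \<noteq> g"
  shows "n dvd card W"
  using assms
proof (induction "card W" arbitrary: W rule: less_induct)
  case less
  show ?case
  proof (cases "W = {}")
    case True then show ?thesis by simp
  next
    case False
    then obtain g where g: "g \<in> W" by blast
    define Orb where "Orb = (\<lambda>k. (f ^^ k) g) ` {..<n}"
    have inj: "inj_on (\<lambda>k. (f ^^ k) g) {..<n}"
    proof (rule inj_onI, rule ccontr)
      fix i j assume ij: "i \<in> {..<n}" "j \<in> {..<n}" "(f ^^ i) g = (f ^^ j) g" "i \<noteq> j"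
      have key: "False" if t: "i < j" "j < n" "(f ^^ i) g = (f ^^ j) g" for i j
      proof -
        have nj: "n - j + j = n" using t(2) by simp
        have "(f ^^ (n - j + i)) g = (f ^^ (n - j)) ((f ^^ i) g)" by (simp only: funpow_add o_apply)
        also have "\<dots> = (f ^^ (n - j)) ((f ^^ j) g)" by (simp only: t(3))
        also have "\<dots> = (f ^^ (n - j + j)) g" by (simp only: funpow_add o_apply)
        also have "\<dots> = (f ^^ n) g" by (simp only: nj)
        also have "\<dots> = g" by (rule less.prems(4)[OF g])
        finally have e: "(f ^^ (n - j + i)) g = g" .
        have a: "n - j + i < n" and b: "0 < n - j + i" using t(1,2) by auto
        from less.prems(5)[OF g b a] e show False by (rule notE)
      qed
      have "i < n" "j < n" using ij(1,2) by auto
      show False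
      proof (cases "i < j")
        case True show ?thesis by (rule key[OF True \<open>j < n\<close> ij(3)])
      next
        case False then have "j < i" using ij(4) by simp
        show ?thesis by (rule key[OF \<open>j < i\<close> \<open>i < n\<close> ij(3)[symmetric]])
      qed
    qed
    have cardO: "card Orb = n" unfolding Orb_def using card_image[OF inj] by simp
    have OW: "Orb \<subseteq> W" unfolding Orb_def using funpow_in[OF less.prems(2) g] by auto
    define W' where "W' = W - Orb"
    have inv': "f ` W' \<subseteq> W'"
    proof
      fix z assume "z \<in> f ` W'"
      then obtain w where w: "w \<in> W'" "z = f w" by blast
      have wW: "w \<in> W" "w \<notin> Orb" using w unfolding W'_def by auto
      have "f w \<notin> Orb"
      proof
        assume "f w \<in> Orb"
        then obtain k where k: "k < n" "f w = (f ^^ k) g" unfolding Orb_def by auto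
        have "w = (f ^^ n) w" using less.prems(4) wW by simp
        also have "\<dots> = (f ^^ (n - 1)) (f w)" using less.prems(3)
          by (metis Suc_diff_1 funpow_Suc_right o_apply)
        also have "\<dots> = (f ^^ (n - 1)) ((f ^^ k) g)" using k by (simp only:)
        also have "\<dots> = (f ^^ (n - 1 + k)) g" by (simp only: funpow_add o_apply)
        finally have w2: "w = (f ^^ (n - 1 + k)) g" .
        show False
        proof (cases k)
          case 0 then show ?thesis using w2 wW less.prems(3) unfolding Orb_def by auto
        next
          case (Suc k')
          have "n - 1 + k = k' + n" using less.prems(3) Suc by simp
          then have "(f ^^ (n - 1 + k)) g = (f ^^ k') ((f ^^ n) g)"
            by (simp only: funpow_add o_apply)
          also have "\<dots> = (f ^^ k') g" using less.prems(4) g by simp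
          finally show ?thesis using w2 wW Suc k unfolding Orb_def by auto
        qed
      qed
      then show "z \<in> W'" using w wW less.prems(2) unfolding W'_def by auto
    qed
    have cW': "card W' = card W - n" unfolding W'_def using OW cardO less.prems(1)
      by (simp add: card_Diff_subset finite_subset)
    have "0 < card W" using False less.prems(1) by (simp add: card_gt_0_iff)
    then have lt: "card W' < card W" using cW' less.prems(3) by simp
    have "n dvd card W'"
    proof (rule less.hyps[OF lt])
      show "finite W'" unfolding W'_def using less.prems(1) by simp
      show "f ` W' \<subseteq> W'" by (rule inv')
      show "0 < n" by (rule less.prems(3))
      show "(f ^^ n) g = g" if "g \<in> W'" for g using that less.prems(4) unfolding W'_def by simp
      show "(f ^^ k) g \<noteq> g" if "g \<in> W'" "0 < k" "k < n" for g k
        using that less.prems(5)[of g k] unfolding W'_def by simp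
    qed
    moreover have "n \<le> card W" using OW cardO less.prems(1) card_mono by metis
    then have "card W = card W' + n" using cW' by simp
    ultimately show ?thesis by simp
  qed
qed

lemma arith1:
  fixes r s a b d :: nat
  assumes "r dvd a" "s dvd b" "coprime r s" "d dvd a" "d dvd b" "0 < a" "0 < b"
  shows "r * s * d \<le> a * b"
proof -
  have "d dvd gcd a b" using assms by simp
  then have d: "d \<le> gcd a b" using assms by (simp add: dvd_imp_le)
  have "r dvd lcm a b" "s dvd lcm a b"
    by (rule dvd_trans[OF assms(1) dvd_lcm1], rule dvd_trans[OF assms(2) dvd_lcm2])
  then have "r * s dvd lcm a b" using assms(3) by (rule divides_mult)
  then have l: "r * s \<le> lcm a b" using assms by (simp add: dvd_imp_le lcm_pos_nat)
  have "r * s * d \<le> lcm a b * gcd a b" by (rule mult_le_mono[OF l d])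
  also have "\<dots> = a * b" using prod_gcd_lcm_nat[of a b] by (simp only: mult.commute)
  finally show ?thesis .
qed

lemma inv_sign:
  assumes "finite S" "p permutes S" "\<And>z. z \<in> S \<Longrightarrow> p (p z) = z" "\<And>z. z \<in> S \<Longrightarrow> p z \<noteq> z"
  shows "even (card S) \<and> sign p = (-1) ^ (card S div 2)"
  using assms
proof (induction "card S" arbitrary: S p rule: less_induct)
  case less
  show ?case
  proof (cases "S = {}")
    case True then have "p = id" using less.prems(2) by simp
    then show ?thesis using True by simp
  next
    case False
    then obtain a where a: "a \<in> S" by blast
    define b where "b = p a"
    have bS: "b \<in> S" unfolding b_def using permutes_in_image[OF less.prems(2)] a by simp
    have ab: "a \<noteq> b" unfolding b_def using less.prems(4)[OF a] by simp
    have pb: "p b = a" unfolding b_def using less.prems(3)[OF a] .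
    define q where "q = transpose a b \<circ> p"
    have qS: "q permutes S" unfolding q_def by (rule permutes_compose[OF less.prems(2) permutes_swap_id[OF a bS]])
    define S' where "S' = S - {a, b}"
    have pz: "p z \<in> S'" and qz: "q z = p z" if z: "z \<in> S'" for z
    proof -
      have zS: "z \<in> S" "z \<noteq> a" "z \<noteq> b" using z by (auto simp: S'_def)
      have "p z \<noteq> a"
      proof
        assume "p z = a"
        then have "p (p z) = b" by (simp add: b_def)
        then show False using less.prems(3)[OF zS(1)] zS by simp
      qed
      moreover have "p z \<noteq> b"
      proof
        assume "p z = b"
        then have "p (p z) = a" using pb by simp
        then show False using less.prems(3)[OF zS(1)] zS by simp
      qed
      moreover have "p z \<in> S" using permutes_in_image[OF less.prems(2)] zS by simp
      ultimately show "p z \<in> S'" "q z = p z" by (auto simp: S'_def q_def)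
    qed
    have qa: "q a = a" by (simp add: q_def b_def[symmetric])
    have qb: "q b = b" by (simp add: q_def pb)
    have qS': "q permutes S'"
      by (rule permutes_superset[OF qS]) (auto simp: S'_def qa qb)
    have finS': "finite S'" using less.prems(1) by (simp add: S'_def)
    have "card {a, b} \<le> card S" using less.prems(1) a bS by (intro card_mono) auto
    then have "2 \<le> card S" using ab by simp
    then have cS: "card S = card S' + 2" using less.prems(1) a bS ab by (simp add: S'_def card_Diff_subset)
    have IH: "even (card S') \<and> sign q = (-1) ^ (card S' div 2)"
    proof (rule less.hyps[of S' q])
      show "card S' < card S" using cS by simp
      show "finite S'" by (rule finS')
      show "q permutes S'" by (rule qS')
      show "q (q z) = z" if "z \<in> S'" for z using qz[OF that] qz[OF pz[OF that]] less.prems(3)[of z] that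
        by (simp add: S'_def)
      show "q z \<noteq> z" if "z \<in> S'" for z using qz[OF that] less.prems(4)[of z] that by (simp add: S'_def)
    qed
    have pq: "p = transpose a b \<circ> q" unfolding q_def by (rule ext) simp
    have "permutation q" using qS' finS' permutation_permutes by blast
    then have "sign p = sign (transpose a b) * sign q"
      unfolding pq by (rule sign_compose[OF permutation_swap_id])
    also have "\<dots> = - sign q" using ab by (simp add: sign_swap_id)
    finally have "sign p = - ((-1) ^ (card S' div 2))" using IH by simp
    moreover have "card S div 2 = card S' div 2 + 1" using cS by simp
    ultimately show ?thesis using IH cS by simp
  qed
qed

locale tw = group G for G (structure) +
  fixes \<alpha> :: "'a \<Rightarrow> 'a" and x y :: 'a
  assumes iso: "\<alpha> \<in> iso G G" and fin: "finite (carrier G)"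
    and xG: "x \<in> carrier G" and yG: "y \<in> carrier G"
begin

lemma ak_closed[simp]: "a \<in> carrier G \<Longrightarrow> (\<alpha> ^^ k) a \<in> carrier G"
  using iso_imp_homomorphism[OF iso] by (induction k) (auto simp: hom_in_carrier)

lemma ak_mult[simp]: "a \<in> carrier G \<Longrightarrow> b \<in> carrier G \<Longrightarrow> (\<alpha> ^^ k) (a \<otimes> b) = (\<alpha> ^^ k) a \<otimes> (\<alpha> ^^ k) b"
  using iso_imp_homomorphism[OF iso] by (induction k) (auto simp: hom_mult)

lemma hom_pow_alpha: "(\<alpha> ^^ k) \<in> hom G G"
  by (auto simp: hom_def)

lemma ak_inv[simp]: "a \<in> carrier G \<Longrightarrow> (\<alpha> ^^ k) (inv a) = inv ((\<alpha> ^^ k) a)"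
proof -
  assume a: "a \<in> carrier G"
  interpret group_hom G G "\<alpha> ^^ k" by (unfold_locales) (rule hom_pow_alpha)
  show ?thesis using a by simp
qed

lemma ak_one[simp]: "(\<alpha> ^^ k) \<one> = \<one>"
proof -
  interpret group_hom G G "\<alpha> ^^ k" by (unfold_locales) (rule hom_pow_alpha)
  show ?thesis by simp
qed

lemma cancel1[simp]: "a \<in> carrier G \<Longrightarrow> b \<in> carrier G \<Longrightarrow> a \<otimes> (inv a \<otimes> b) = b"
  by (simp add: m_assoc[symmetric])
lemma cancel2[simp]: "a \<in> carrier G \<Longrightarrow> b \<in> carrier G \<Longrightarrow> inv a \<otimes> (a \<otimes> b) = b"
  by (simp add: m_assoc[symmetric])

lemma a_closed[simp]: "a \<in> carrier G \<Longrightarrow> \<alpha> a \<in> carrier G"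
  using ak_closed[of a 1] by simp

lemma N_closed[simp]: "a \<in> carrier G \<Longrightarrow> twisted_norm G \<alpha> k a \<in> carrier G"
  by (induction k) auto

definition phi :: "'a \<Rightarrow> 'a" where "phi g = x \<otimes> \<alpha> g \<otimes> inv y"

lemma phi_closed[simp]: "g \<in> carrier G \<Longrightarrow> phi g \<in> carrier G"
  by (simp add: phi_def xG yG)

lemma phi_pow: "g \<in> carrier G \<Longrightarrow>
  (phi ^^ k) g = twisted_norm G \<alpha> k x \<otimes> (\<alpha> ^^ k) g \<otimes> inv (twisted_norm G \<alpha> k y)"
proof (induction k arbitrary: g)
  case 0 then show ?case by simp
next
  case (Suc k)
  have "(phi ^^ Suc k) g = (phi ^^ k) (phi g)" by (simp add: funpow_Suc_right del: funpow.simps)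
  also have "\<dots> = twisted_norm G \<alpha> k x \<otimes> (\<alpha> ^^ k) (phi g) \<otimes> inv (twisted_norm G \<alpha> k y)"
    by (rule Suc.IH[OF phi_closed[OF Suc.prems]])
  also have "\<dots> = twisted_norm G \<alpha> k x \<otimes> (\<alpha> ^^ k) (x \<otimes> \<alpha> g \<otimes> inv y) \<otimes> inv (twisted_norm G \<alpha> k y)"
    by (simp add: phi_def)
  also have "\<dots> = twisted_norm G \<alpha> (Suc k) x \<otimes> (\<alpha> ^^ Suc k) g \<otimes> inv (twisted_norm G \<alpha> (Suc k) y)"
    using Suc xG yG by (simp add: m_assoc inv_mult_group funpow_Suc_right del: funpow.simps)
  finally show ?case .
qed

lemma tc_iff: "twisted_conj G \<alpha> m (twisted_norm G \<alpha> m x) (twisted_norm G \<alpha> m y) \<longleftrightarrow>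
   (\<exists>g\<in>carrier G. (phi ^^ m) g = g)"
proof -
  define u where "u = twisted_norm G \<alpha> m x"
  define v where "v = twisted_norm G \<alpha> m y"
  have u: "u \<in> carrier G" and v: "v \<in> carrier G" using xG yG by (auto simp: u_def v_def)
  have "(v = inv z \<otimes> u \<otimes> (\<alpha> ^^ m) z) \<longleftrightarrow> (u \<otimes> (\<alpha> ^^ m) z \<otimes> inv v = z)" if z: "z \<in> carrier G" for z
  proof
    assume h: "v = inv z \<otimes> u \<otimes> (\<alpha> ^^ m) z"
    show "u \<otimes> (\<alpha> ^^ m) z \<otimes> inv v = z" unfolding h using u z
      by (simp add: m_assoc inv_mult_group)
  next
    assume h: "u \<otimes> (\<alpha> ^^ m) z \<otimes> inv v = z"
    have "inv z \<otimes> u \<otimes> (\<alpha> ^^ m) z = inv (u \<otimes> (\<alpha> ^^ m) z \<otimes> inv v) \<otimes> u \<otimes> (\<alpha> ^^ m) z"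
      using h by simp
    also have "\<dots> = v" using u v z by (simp add: m_assoc inv_mult_group)
    finally show "v = inv z \<otimes> u \<otimes> (\<alpha> ^^ m) z" by simp
  qed
  moreover have "(phi ^^ m) z = u \<otimes> (\<alpha> ^^ m) z \<otimes> inv v" if "z \<in> carrier G" for z
    using phi_pow[OF that] by (simp add: u_def v_def)
  ultimately show ?thesis unfolding twisted_conj_def u_def[symmetric] v_def[symmetric]
    by metis
qed

definition Xs :: "nat \<Rightarrow> 'a set" where "Xs m = {g \<in> carrier G. (phi ^^ m) g = g}"
definition Ny :: "nat \<Rightarrow> 'a" where "Ny m = twisted_norm G \<alpha> m y"
definition Cm :: "nat \<Rightarrow> 'a set" where
  "Cm m = {h \<in> carrier G. Ny m \<otimes> (\<alpha> ^^ m) h \<otimes> inv (Ny m) = h}"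

lemma Ny_closed[simp]: "Ny m \<in> carrier G" by (simp add: Ny_def yG)

lemma lcancel_iff: "a \<in> carrier G \<Longrightarrow> b \<in> carrier G \<Longrightarrow> c \<in> carrier G \<Longrightarrow> a \<otimes> b = a \<otimes> c \<longleftrightarrow> b = c"
  by (metis cancel2)

lemma C_subgroup: "subgroup (Cm m) G"
proof (rule subgroupI)
  show "Cm m \<subseteq> carrier G" by (auto simp: Cm_def)
  show "Cm m \<noteq> {}" using Ny_closed[of m] by (auto simp: Cm_def intro!: exI[of _ \<one>])
next
  fix a assume a: "a \<in> Cm m"
  then have aG: "a \<in> carrier G" and e: "Ny m \<otimes> (\<alpha> ^^ m) a \<otimes> inv (Ny m) = a" by (auto simp: Cm_def)
  have "Ny m \<otimes> (\<alpha> ^^ m) (inv a) \<otimes> inv (Ny m) = inv (Ny m \<otimes> (\<alpha> ^^ m) a \<otimes> inv (Ny m))"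
    using aG by (simp add: inv_mult_group m_assoc)
  then have "Ny m \<otimes> (\<alpha> ^^ m) (inv a) \<otimes> inv (Ny m) = inv a" unfolding e .
  then show "inv a \<in> Cm m" using aG by (simp add: Cm_def)
next
  fix a b assume a: "a \<in> Cm m" and b: "b \<in> Cm m"
  then have aG: "a \<in> carrier G" and ea: "Ny m \<otimes> (\<alpha> ^^ m) a \<otimes> inv (Ny m) = a"
    and bG: "b \<in> carrier G" and eb: "Ny m \<otimes> (\<alpha> ^^ m) b \<otimes> inv (Ny m) = b" by (auto simp: Cm_def)
  have "Ny m \<otimes> (\<alpha> ^^ m) (a \<otimes> b) \<otimes> inv (Ny m) =
     (Ny m \<otimes> (\<alpha> ^^ m) a \<otimes> inv (Ny m)) \<otimes> (Ny m \<otimes> (\<alpha> ^^ m) b \<otimes> inv (Ny m))"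
    using aG bG by (simp add: m_assoc)
  then have "Ny m \<otimes> (\<alpha> ^^ m) (a \<otimes> b) \<otimes> inv (Ny m) = a \<otimes> b" unfolding ea eb .
  then show "a \<otimes> b \<in> Cm m" using aG bG by (simp add: Cm_def)
qed

lemma X_coset:
  assumes g0: "g0 \<in> Xs m" and h: "h \<in> carrier G"
  shows "g0 \<otimes> h \<in> Xs m \<longleftrightarrow> h \<in> Cm m"
proof -
  define u where "u = twisted_norm G \<alpha> m x"
  have u: "u \<in> carrier G" by (simp add: u_def xG)
  have g0G: "g0 \<in> carrier G" and e: "u \<otimes> (\<alpha> ^^ m) g0 \<otimes> inv (Ny m) = g0"
    using g0 phi_pow[of g0 m] by (auto simp: Xs_def u_def Ny_def)
  have e2: "u \<otimes> (\<alpha> ^^ m) g0 = g0 \<otimes> Ny m"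
  proof -
    have "u \<otimes> (\<alpha> ^^ m) g0 = (u \<otimes> (\<alpha> ^^ m) g0 \<otimes> inv (Ny m)) \<otimes> Ny m"
      using u g0G by (simp add: m_assoc)
    then show ?thesis using e by simp
  qed
  have "(phi ^^ m) (g0 \<otimes> h) = u \<otimes> ((\<alpha> ^^ m) g0 \<otimes> (\<alpha> ^^ m) h) \<otimes> inv (Ny m)"
    using phi_pow[of "g0 \<otimes> h" m] g0G h by (simp add: u_def Ny_def)
  also have "\<dots> = (u \<otimes> (\<alpha> ^^ m) g0) \<otimes> (\<alpha> ^^ m) h \<otimes> inv (Ny m)"
    using u g0G h by (simp add: m_assoc)
  also have "\<dots> = g0 \<otimes> (Ny m \<otimes> (\<alpha> ^^ m) h \<otimes> inv (Ny m))"
    using e2 g0G h by (simp add: m_assoc)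
  finally have p: "(phi ^^ m) (g0 \<otimes> h) = g0 \<otimes> (Ny m \<otimes> (\<alpha> ^^ m) h \<otimes> inv (Ny m))" .
  have gh: "g0 \<otimes> h \<in> carrier G" using g0G h by simp
  have "g0 \<otimes> h \<in> Xs m \<longleftrightarrow> (phi ^^ m) (g0 \<otimes> h) = g0 \<otimes> h" using gh by (simp add: Xs_def)
  also have "\<dots> \<longleftrightarrow> g0 \<otimes> (Ny m \<otimes> (\<alpha> ^^ m) h \<otimes> inv (Ny m)) = g0 \<otimes> h" by (simp only: p)
  also have "\<dots> \<longleftrightarrow> Ny m \<otimes> (\<alpha> ^^ m) h \<otimes> inv (Ny m) = h"
    by (rule lcancel_iff) (use g0G h in simp_all)
  also have "\<dots> \<longleftrightarrow> h \<in> Cm m" using h by (simp add: Cm_def)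
  finally show ?thesis .
qed

lemma card_X:
  assumes g0: "g0 \<in> Xs m"
  shows "card (Xs m) = card (Cm m)"
proof -
  have g0G: "g0 \<in> carrier G" using g0 by (simp add: Xs_def)
  have "bij_betw (\<lambda>h. g0 \<otimes> h) (Cm m) (Xs m)"
  proof (rule bij_betw_imageI)
    show "inj_on (\<lambda>h. g0 \<otimes> h) (Cm m)"
      using inj_on_cmult[OF g0G] by (rule inj_on_subset) (simp add: Cm_def subset_iff)
    show "(\<lambda>h. g0 \<otimes> h) ` Cm m = Xs m"
    proof
      show "(\<lambda>h. g0 \<otimes> h) ` Cm m \<subseteq> Xs m"
      proof
        fix z assume "z \<in> (\<lambda>h. g0 \<otimes> h) ` Cm m"
        then obtain h where hC: "h \<in> Cm m" and z: "z = g0 \<otimes> h" by blast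
        then have hG: "h \<in> carrier G" by (simp add: Cm_def)
        show "z \<in> Xs m" unfolding z by (rule iffD2[OF X_coset[OF g0 hG] hC])
      qed
      show "Xs m \<subseteq> (\<lambda>h. g0 \<otimes> h) ` Cm m"
      proof
        fix g assume g: "g \<in> Xs m"
        then have gG: "g \<in> carrier G" by (simp add: Xs_def)
        have "g0 \<otimes> (inv g0 \<otimes> g) = g" using g0G gG by (rule cancel1)
        then have "g0 \<otimes> (inv g0 \<otimes> g) \<in> Xs m" using g by simp
        then have "inv g0 \<otimes> g \<in> Cm m" by (rule iffD1[OF X_coset[OF g0 m_closed[OF inv_closed[OF g0G] gG]]])
        moreover have "g = g0 \<otimes> (inv g0 \<otimes> g)" using cancel1[OF g0G gG] by simp
        ultimately show "g \<in> (\<lambda>h. g0 \<otimes> h) ` Cm m" by (rule rev_image_eqI)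
      qed
    qed
  qed
  then show ?thesis by (rule bij_betw_same_card[symmetric])
qed

lemma X_sub: "Xs m \<subseteq> carrier G" by (auto simp: Xs_def)
lemma phi_X: "phi ` Xs m \<subseteq> Xs m"
proof
  fix z assume "z \<in> phi ` Xs m"
  then obtain g where g: "g \<in> Xs m" "z = phi g" by blast
  then have gG: "g \<in> carrier G" and e: "(phi ^^ m) g = g" by (auto simp: Xs_def)
  have "(phi ^^ m) (phi g) = phi ((phi ^^ m) g)" by (rule funpow_swap1[symmetric])
  then show "z \<in> Xs m" using g gG e by (simp add: Xs_def)
qed

lemma sub_dvd: assumes "subgroup H G" shows "card H dvd order G"
  using lagrange[OF assms] by (metis dvd_triv_right)

lemma sub_sub_dvd:
  assumes D: "subgroup D G" and A: "subgroup A G" and DA: "D \<subseteq> A"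
  shows "card D dvd card A"
proof -
  have gA: "group (G\<lparr>carrier := A\<rparr>)" using subgroup.subgroup_is_group[OF A is_group] .
  have "subgroup D (G\<lparr>carrier := A\<rparr>)" by (rule subgroup_incl[OF D A DA])
  from group.lagrange[OF gA this] show ?thesis by (simp add: order_def) (metis dvd_triv_right)
qed

lemma Xs_dvd_order: assumes "g0 \<in> Xs m" shows "card (Xs m) dvd order G"
  using card_X[OF assms] sub_dvd[OF C_subgroup] by simp

lemma noper:
  assumes hd: "\<And>d. d dvd m \<Longrightarrow> d < m \<Longrightarrow> 0 < d \<Longrightarrow> Xs d = {}"
    and g: "g \<in> Xs m" and k: "0 < k" "k < m"
  shows "(phi ^^ k) g \<noteq> g"
proof
  assume e: "(phi ^^ k) g = g"
  have gG: "g \<in> carrier G" and em: "(phi ^^ m) g = g" using g by (auto simp: Xs_def)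
  have ed: "(phi ^^ gcd k m) g = g" by (rule fix_gcd[OF e em])
  have "gcd k m \<le> k" using k by (simp add: gcd_le1_nat)
  then have "gcd k m < m" using k by linarith
  moreover have "0 < gcd k m" using k by simp
  moreover have "gcd k m dvd m" by simp
  ultimately have "Xs (gcd k m) = {}" using hd by blast
  moreover have "g \<in> Xs (gcd k m)" using gG ed by (simp add: Xs_def)
  ultimately show False by simp
qed

lemma dvd_W:
  assumes hd: "\<And>d. d dvd m \<Longrightarrow> d < m \<Longrightarrow> 0 < d \<Longrightarrow> Xs d = {}"
    and m: "0 < m" and W: "W \<subseteq> Xs m" and inv: "phi ` W \<subseteq> W"
  shows "m dvd card W"
proof (rule orbit_dvd[OF _ inv m])
  show "finite W" using W X_sub fin by (meson finite_subset)
  show "(phi ^^ m) g = g" if "g \<in> W" for g using that W by (auto simp: Xs_def)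
  show "(phi ^^ k) g \<noteq> g" if "g \<in> W" "0 < k" "k < m" for g k
    using noper[OF hd subsetD[OF W that(1)] that(2) that(3)] .
qed

lemma prod_fib:
  assumes A: "subgroup A G" and B: "subgroup B G"
  shows "card A * card B \<le> card ((\<lambda>p. fst p \<otimes> snd p) ` (A \<times> B)) * card (A \<inter> B)"
proof -
  define F where "F = (\<lambda>p. fst p \<otimes> snd p)"
  define fib where "fib z = {p \<in> A \<times> B. F p = z}" for z
  have AG: "A \<subseteq> carrier G" and BG: "B \<subseteq> carrier G" using A B subgroup.subset by auto
  have finA: "finite A" and finB: "finite B" using AG BG fin finite_subset by auto
  have fib_le: "card (fib z) \<le> card (A \<inter> B)" for z
  proof (cases "fib z = {}")
    case True then show ?thesis by simp
  next
    case False
    then obtain h0 k0 where p0: "h0 \<in> A" "k0 \<in> B" "h0 \<otimes> k0 = z" by (auto simp: fib_def F_def)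
    have h0G: "h0 \<in> carrier G" and k0G: "k0 \<in> carrier G" using p0 AG BG by auto
    have "inj_on (\<lambda>p. inv h0 \<otimes> fst p) (fib z)"
    proof (rule inj_onI)
      fix p q assume p: "p \<in> fib z" and q: "q \<in> fib z" and e: "inv h0 \<otimes> fst p = inv h0 \<otimes> fst q"
      obtain h k where pp: "p = (h, k)" "h \<in> A" "k \<in> B" "h \<otimes> k = z" using p by (auto simp: fib_def F_def)
      obtain h' k' where qq: "q = (h', k')" "h' \<in> A" "k' \<in> B" "h' \<otimes> k' = z" using q by (auto simp: fib_def F_def)
      have hG: "h \<in> carrier G" "k \<in> carrier G" "h' \<in> carrier G" "k' \<in> carrier G" using pp qq AG BG by auto
      have "h = h'" using e pp qq hG h0G lcancel_iff[of "inv h0" h h'] by simp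
      moreover then have "k = k'" using pp qq hG lcancel_iff[of h k k'] by simp
      ultimately show "p = q" using pp qq by simp
    qed
    moreover have "(\<lambda>p. inv h0 \<otimes> fst p) ` (fib z) \<subseteq> A \<inter> B"
    proof
      fix w assume "w \<in> (\<lambda>p. inv h0 \<otimes> fst p) ` (fib z)"
      then obtain h k where pp: "w = inv h0 \<otimes> h" "h \<in> A" "k \<in> B" "h \<otimes> k = z"
        by (auto simp: fib_def F_def)
      have hG: "h \<in> carrier G" "k \<in> carrier G" using pp AG BG by auto
      have "w \<in> A" using pp p0 A by (simp add: subgroup.m_closed subgroup.m_inv_closed)
      moreover have "w = k0 \<otimes> inv k"
      proof -
        have "h \<otimes> k = h0 \<otimes> k0" using pp p0 by simp
        then have "inv h0 \<otimes> (h \<otimes> k) \<otimes> inv k = inv h0 \<otimes> (h0 \<otimes> k0) \<otimes> inv k" by simp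
        then show ?thesis using hG h0G k0G pp(1) by (simp add: m_assoc)
      qed
      then have "w \<in> B" using pp p0 B by (simp add: subgroup.m_closed subgroup.m_inv_closed)
      ultimately show "w \<in> A \<inter> B" by simp
    qed
    moreover have "finite (A \<inter> B)" using finA by simp
    ultimately show ?thesis by (rule card_inj_on_le)
  qed
  have "A \<times> B \<subseteq> (\<Union>z\<in>F ` (A \<times> B). fib z)" by (auto simp: fib_def)
  then have "card (A \<times> B) \<le> card (\<Union>z\<in>F ` (A \<times> B). fib z)"
    by (rule card_mono[rotated]) (auto simp: fib_def finA finB)
  also have "\<dots> \<le> (\<Sum>z\<in>F ` (A \<times> B). card (fib z))"
    by (rule card_UN_le) (simp add: finA finB)
  also have "\<dots> \<le> (\<Sum>z\<in>F ` (A \<times> B). card (A \<inter> B))" by (rule sum_mono) (rule fib_le)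
  also have "\<dots> = card (F ` (A \<times> B)) * card (A \<inter> B)" by simp
  finally show ?thesis by (simp add: card_cartesian_product F_def)
qed

lemma main12:
  assumes r1: "1 < r" and s1: "1 < s" and cop: "coprime r s"
    and hr: "Xs r \<noteq> {}" and hs: "Xs s \<noteq> {}"
    and hdr: "\<And>d. d dvd r \<Longrightarrow> d < r \<Longrightarrow> 0 < d \<Longrightarrow> Xs d = {}"
    and hds: "\<And>d. d dvd s \<Longrightarrow> d < s \<Longrightarrow> 0 < d \<Longrightarrow> Xs d = {}"
  shows "r * s dvd order G \<and> order G \<noteq> r * s"
proof -
  obtain gr where gr: "gr \<in> Xs r" using hr by blast
  obtain gs where gs: "gs \<in> Xs s" using hs by blast
  have grG: "gr \<in> carrier G" and gsG: "gs \<in> carrier G" using gr gs X_sub by auto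
  have rX: "r dvd card (Xs r)" using dvd_W[OF hdr _ subset_refl phi_X] r1 by simp
  have sX: "s dvd card (Xs s)" using dvd_W[OF hds _ subset_refl phi_X] s1 by simp
  have "r dvd order G" using rX Xs_dvd_order[OF gr] by (rule dvd_trans)
  moreover have "s dvd order G" using sX Xs_dvd_order[OF gs] by (rule dvd_trans)
  ultimately have part1: "r * s dvd order G" using cop by (rule divides_mult)
  have part2: "order G \<noteq> r * s"
  proof
    assume ord: "order G = r * s"
    define A where "A = Cm r"
    define B where "B = Cm s"
    have sA: "subgroup A G" and sB: "subgroup B G" unfolding A_def B_def by (rule C_subgroup)+
    have sD: "subgroup (A \<inter> B) G" using sA sB by (rule subgroups_Inter_pair)
    have cA: "card A = card (Xs r)" and cB: "card B = card (Xs s)"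
      unfolding A_def B_def using card_X[OF gr] card_X[OF gs] by simp_all
    have AG: "A \<subseteq> carrier G" and BG: "B \<subseteq> carrier G" using sA sB subgroup.subset by auto
    have "\<one> \<in> A" "\<one> \<in> B" using sA sB subgroup.one_closed by auto
    then have pA: "0 < card A" and pB: "0 < card B" using AG BG fin
      by (auto simp: card_gt_0_iff intro: finite_subset)
    have dA: "card (A \<inter> B) dvd card A" by (rule sub_sub_dvd[OF sD sA]) auto
    have dB: "card (A \<inter> B) dvd card B" by (rule sub_sub_dvd[OF sD sB]) auto
    have "r * s * card (A \<inter> B) \<le> card A * card B"
      by (rule arith1) (use rX sX cA cB cop dA dB pA pB in auto)
    also have "\<dots> \<le> card ((\<lambda>p. fst p \<otimes> snd p) ` (A \<times> B)) * card (A \<inter> B)"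
      by (rule prod_fib[OF sA sB])
    finally have le: "r * s * card (A \<inter> B) \<le> card ((\<lambda>p. fst p \<otimes> snd p) ` (A \<times> B)) * card (A \<inter> B)" .
    have "\<one> \<in> A \<inter> B" using sD subgroup.one_closed by auto
    then have "0 < card (A \<inter> B)" using AG fin by (auto simp: card_gt_0_iff intro: finite_subset)
    then have le2: "r * s \<le> card ((\<lambda>p. fst p \<otimes> snd p) ` (A \<times> B))" using le by simp
    have imgG: "(\<lambda>p. fst p \<otimes> snd p) ` (A \<times> B) \<subseteq> carrier G" using AG BG by (auto intro!: m_closed)
    have "(\<lambda>p. fst p \<otimes> snd p) ` (A \<times> B) = carrier G"
    proof (rule card_subset_eq[OF fin imgG])
      show "card ((\<lambda>p. fst p \<otimes> snd p) ` (A \<times> B)) = card (carrier G)"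
        using le2 ord card_mono[OF fin imgG] by (simp add: order_def)
    qed
    moreover have "inv gr \<otimes> gs \<in> carrier G" using grG gsG by simp
    ultimately have "inv gr \<otimes> gs \<in> (\<lambda>p. fst p \<otimes> snd p) ` (A \<times> B)" by simp
    then obtain p where p: "p \<in> A \<times> B" "inv gr \<otimes> gs = fst p \<otimes> snd p" by (rule imageE)
    obtain h k where hk: "h \<in> A" "k \<in> B" "inv gr \<otimes> gs = h \<otimes> k" using p by (cases p) auto
    have hG: "h \<in> carrier G" and kG: "k \<in> carrier G" using hk AG BG by auto
    have e1: "gr \<otimes> h \<in> Xs r" using iffD2[OF X_coset[OF gr hG]] hk(1) by (simp add: A_def)
    have "inv k \<in> B" using sB hk(2) by (simp add: subgroup.m_inv_closed)
    then have e2: "gs \<otimes> inv k \<in> Xs s" using iffD2[OF X_coset[OF gs inv_closed[OF kG]]] by (simp add: B_def)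
    have "gs = gr \<otimes> (h \<otimes> k)"
    proof -
      have "gr \<otimes> (inv gr \<otimes> gs) = gs" using grG gsG by (rule cancel1)
      then show ?thesis using hk(3) by simp
    qed
    then have "gs \<otimes> inv k = gr \<otimes> h" using grG hG kG by (simp add: m_assoc)
    then have g: "gr \<otimes> h \<in> Xs r" "gr \<otimes> h \<in> Xs s" using e1 e2 by simp_all
    have "(phi ^^ gcd r s) (gr \<otimes> h) = gr \<otimes> h"
      by (rule fix_gcd) (use g in \<open>simp_all add: Xs_def\<close>)
    then have "gr \<otimes> h \<in> Xs 1" using cop grG hG by (simp add: Xs_def)
    moreover have "Xs 1 = {}" using hdr[of 1] r1 by simp
    ultimately show False by simp
  qed
  show ?thesis using part1 part2 by simp
qed

definition L :: "'a \<Rightarrow> 'a \<Rightarrow> 'a" where "L g = (\<lambda>h. if h \<in> carrier G then g \<otimes> h else h)"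
definition sg :: "'a \<Rightarrow> int" where "sg g = sign (L g)"

lemma L_permutes: assumes g: "g \<in> carrier G" shows "L g permutes carrier G"
proof (rule bij_imp_permutes)
  show "bij_betw (L g) (carrier G) (carrier G)"
  proof (rule bij_betw_imageI)
    show "inj_on (L g) (carrier G)"
    proof (rule inj_onI)
      fix a b assume "a \<in> carrier G" "b \<in> carrier G" "L g a = L g b"
      then show "a = b" using lcancel_iff[OF g] by (simp add: L_def)
    qed
    show "L g ` carrier G = carrier G"
    proof
      show "L g ` carrier G \<subseteq> carrier G" using g by (auto simp: L_def)
      show "carrier G \<subseteq> L g ` carrier G"
      proof
        fix z assume z: "z \<in> carrier G"
        have "z = L g (inv g \<otimes> z)" using g z by (simp add: L_def)
        moreover have "inv g \<otimes> z \<in> carrier G" using g z by simp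
        ultimately show "z \<in> L g ` carrier G" by (rule image_eqI)
      qed
    qed
  qed
  show "L g z = z" if "z \<notin> carrier G" for z using that by (simp add: L_def)
qed

lemma L_perm: "g \<in> carrier G \<Longrightarrow> permutation (L g)"
  using L_permutes fin permutation_permutes by blast

lemma L_mult: "g \<in> carrier G \<Longrightarrow> h \<in> carrier G \<Longrightarrow> L (g \<otimes> h) = L g \<circ> L h"
  by (rule ext) (simp add: L_def m_assoc)

lemma sg_mult: "g \<in> carrier G \<Longrightarrow> h \<in> carrier G \<Longrightarrow> sg (g \<otimes> h) = sg g * sg h"
  unfolding sg_def by (simp add: L_mult sign_compose L_perm)

lemma sg_one[simp]: "sg \<one> = 1"
proof -
  have "L \<one> = id" by (rule ext) (simp add: L_def)
  then show ?thesis by (simp add: sg_def)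
qed

lemma sg_pm: "sg g = 1 \<or> sg g = -1"
  by (simp add: sg_def sign_def)

lemma sg_inv: assumes g: "g \<in> carrier G" shows "sg (inv g) = sg g"
proof -
  have "sg (inv g) * sg g = 1" using sg_mult[of "inv g" g] g by simp
  then show ?thesis using sg_pm[of g] sg_pm[of "inv g"] by auto
qed

lemma sg_pow: "g \<in> carrier G \<Longrightarrow> sg (g [^] (n::nat)) = sg g ^ n"
  by (induction n) (simp_all add: sg_mult)

lemma sg_invol:
  assumes t: "t \<in> carrier G" "t \<otimes> t = \<one>" "t \<noteq> \<one>"
  shows "sg t = (-1) ^ (order G div 2)"
proof -
  have "even (card (carrier G)) \<and> sign (L t) = (-1) ^ (card (carrier G) div 2)"
  proof (rule inv_sign[OF fin L_permutes[OF t(1)]])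
    show "L t (L t z) = z" if "z \<in> carrier G" for z
      using that t by (simp add: L_def m_assoc[symmetric])
    show "L t z \<noteq> z" if "z \<in> carrier G" for z
      using that t by (simp add: L_def)
  qed
  then show ?thesis by (simp add: sg_def order_def)
qed

lemma cauchy2:
  assumes H: "subgroup H G" and ev: "even (card H)"
  shows "\<exists>t\<in>H. t \<noteq> \<one> \<and> t \<otimes> t = \<one>"
proof -
  have gH: "group (G\<lparr>carrier := H\<rparr>)" using subgroup.subgroup_is_group[OF H is_group] .
  have finH: "finite H" using H fin subgroup.subset finite_subset by blast
  have "order (G\<lparr>carrier := H\<rparr>) = 2 ^ 1 * (card H div 2)" using ev by (simp add: order_def)
  then obtain K where K: "subgroup K (G\<lparr>carrier := H\<rparr>)" "card K = 2 ^ 1"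
    using sylow_thm[of 2 "G\<lparr>carrier := H\<rparr>" 1 "card H div 2"] gH finH by auto
  have KH: "K \<subseteq> H" using subgroup.subset[OF K(1)] by simp
  have oneK: "\<one> \<in> K" using subgroup.one_closed[OF K(1)] by simp
  obtain u v where uv: "K = {u, v}" "u \<noteq> v" using K(2) by (auto simp: card_2_iff)
  obtain t where t: "t \<in> K" "t \<noteq> \<one>" using uv oneK by blast
  have tt: "t \<otimes> t \<in> K" using subgroup.m_closed[OF K(1) t(1) t(1)] by simp
  have tG: "t \<in> carrier G" using t KH H subgroup.subset by blast
  have "K = {\<one>, t}" using uv oneK t by auto
  then have "t \<otimes> t = \<one> \<or> t \<otimes> t = t" using tt by auto
  moreover have "t \<otimes> t \<noteq> t" using tG t(2) by simp
  ultimately show ?thesis using t KH by blast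
qed

lemma phi_carrier: "phi ` carrier G \<subseteq> carrier G" by auto

lemma main3:
  assumes ord4: "order G mod 4 = 2" and r1: "1 < r" and evr: "even r" and ods: "odd s"
    and hr: "Xs r \<noteq> {}" and hs: "Xs s \<noteq> {}"
    and hdr: "\<And>d. d dvd r \<Longrightarrow> d < r \<Longrightarrow> 0 < d \<Longrightarrow> Xs d = {}"
  shows False
proof -
  define K0 where "K0 = {g \<in> carrier G. sg g = 1}"
  have oh: "odd (order G div 2)" using ord4 by presburger
  have invol: "sg t = -1" if "t \<in> carrier G" "t \<otimes> t = \<one>" "t \<noteq> \<one>" for t
    using sg_invol[OF that] oh by simp
  have K0G: "K0 \<subseteq> carrier G" by (auto simp: K0_def)
  have finK0: "finite K0" using K0G fin finite_subset by blast
  have sK0: "subgroup K0 G"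
  proof (rule subgroupI)
    show "K0 \<subseteq> carrier G" by (rule K0G)
    show "K0 \<noteq> {}" by (auto simp: K0_def intro!: exI[of _ \<one>])
    show "inv a \<in> K0" if "a \<in> K0" for a using that by (auto simp: K0_def sg_inv)
    show "a \<otimes> b \<in> K0" if "a \<in> K0" "b \<in> K0" for a b using that by (auto simp: K0_def sg_mult)
  qed
  have oddsub: "odd (card H)" if H: "subgroup H G" "H \<subseteq> K0" for H
  proof
    assume "even (card H)"
    then obtain t where t: "t \<in> H" "t \<noteq> \<one>" "t \<otimes> t = \<one>" using cauchy2[OF H(1)] by blast
    have tG: "t \<in> carrier G" using t H(1) subgroup.subset by blast
    have "sg t = -1" using invol[OF tG t(3) t(2)] .
    moreover have "sg t = 1" using t H(2) by (auto simp: K0_def)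
    ultimately show False by simp
  qed
  have oK0: "odd (card K0)" by (rule oddsub[OF sK0 subset_refl])
  have hom: "\<alpha> \<in> hom G G" by (rule iso_imp_homomorphism[OF iso])
  have injA: "inj_on \<alpha> (carrier G)" using iso by (simp add: iso_iff)
  have aone: "\<alpha> \<one> = \<one>" using ak_one[of 1] by simp
  have aK: "\<alpha> g \<in> K0" if g: "g \<in> K0" for g
  proof -
    have gG: "g \<in> carrier G" using g K0G by blast
    have gK: "group (G\<lparr>carrier := K0\<rparr>)" using subgroup.subgroup_is_group[OF sK0 is_group] .
    have "g [^]\<^bsub>G\<lparr>carrier := K0\<rparr>\<^esub> order (G\<lparr>carrier := K0\<rparr>) = \<one>\<^bsub>G\<lparr>carrier := K0\<rparr>\<^esub>"
      using group.pow_order_eq_1[OF gK] g by simp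
    then have gp: "g [^] card K0 = \<one>" by (simp add: order_def nat_pow_consistent[symmetric])
    have "\<alpha> (g [^] card K0) = \<alpha> g [^] card K0" by (rule hom_nat_pow[OF hom gG is_group is_group])
    then have "\<alpha> g [^] card K0 = \<one>" using gp aone by simp
    then have "sg (\<alpha> g) ^ card K0 = 1" using sg_pow[of "\<alpha> g" "card K0"] gG by simp
    then have "sg (\<alpha> g) = 1" using sg_pm[of "\<alpha> g"] oK0 by auto
    then show ?thesis using gG by (simp add: K0_def)
  qed
  have aKeq: "\<alpha> ` K0 = K0"
  proof (rule card_subset_eq[OF finK0])
    show "\<alpha> ` K0 \<subseteq> K0" using aK by blast
    show "card (\<alpha> ` K0) = card K0" using inj_on_subset[OF injA K0G] by (rule card_image)
  qed
  have sg_alpha: "sg (\<alpha> g) = sg g" if gG: "g \<in> carrier G" for g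
  proof (cases "sg g = 1")
    case True then show ?thesis using aK[of g] gG by (simp add: K0_def)
  next
    case False
    then have m1: "sg g = -1" using sg_pm[of g] by simp
    have "sg (\<alpha> g) \<noteq> 1"
    proof
      assume "sg (\<alpha> g) = 1"
      then have "\<alpha> g \<in> \<alpha> ` K0" using aKeq gG by (simp add: K0_def)
      then obtain k where k: "k \<in> K0" "\<alpha> g = \<alpha> k" by blast
      have "g = k" using injA gG k K0G by (meson inj_onD subsetD)
      then show False using k False by (simp add: K0_def)
    qed
    then show ?thesis using m1 sg_pm[of "\<alpha> g"] by simp
  qed
  have sg_phi: "sg (phi g) = (sg x * sg y) * sg g" if gG: "g \<in> carrier G" for g
    using gG xG yG by (simp add: phi_def sg_mult sg_inv sg_alpha)
  obtain gr where gr: "gr \<in> Xs r" using hr by blast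
  obtain gs where gs: "gs \<in> Xs s" using hs by blast
  have grG: "gr \<in> carrier G" and gsG: "gs \<in> carrier G" using gr gs X_sub by auto
  show False
  proof (cases "sg x * sg y = 1")
    case False
    then have e: "sg x * sg y = -1" using sg_pm[of x] sg_pm[of y] by auto
    have it: "sg ((phi ^^ k) g) = (-1) ^ k * sg g" if gG: "g \<in> carrier G" for g k
    proof (induction k)
      case 0 then show ?case by simp
    next
      case (Suc k)
      have "(phi ^^ k) g \<in> carrier G" using funpow_in[OF phi_carrier gG] .
      then show ?case using Suc sg_phi[of "(phi ^^ k) g"] e by simp
    qed
    have "(phi ^^ s) gs = gs" using gs by (simp add: Xs_def)
    then have "sg gs = (-1) ^ s * sg gs" using it[OF gsG, of s] by simp
    then have "sg gs = - sg gs" using ods by simp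
    then show False using sg_pm[of gs] by auto
  next
    case True
    have sgphi: "sg (phi g) = sg g" if "g \<in> carrier G" for g using sg_phi[OF that] True by simp
    define W where "W = {g \<in> Xs r. sg g = sg gr}"
    have WX: "W \<subseteq> Xs r" by (auto simp: W_def)
    have Winv: "phi ` W \<subseteq> W"
    proof
      fix z assume "z \<in> phi ` W"
      then obtain g where g: "g \<in> W" "z = phi g" by blast
      then have gX: "g \<in> Xs r" and gsg: "sg g = sg gr" by (auto simp: W_def)
      have "phi g \<in> Xs r" using phi_X gX by blast
      moreover have "sg (phi g) = sg gr" using sgphi[of g] gX X_sub gsg by auto
      ultimately show "z \<in> W" using g by (simp add: W_def)
    qed
    have rW: "r dvd card W" using dvd_W[OF hdr _ WX Winv] r1 by simp
    define D where "D = Cm r \<inter> K0"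
    have sD: "subgroup D G" unfolding D_def by (rule subgroups_Inter_pair[OF C_subgroup sK0])
    have oD: "odd (card D)" by (rule oddsub[OF sD]) (auto simp: D_def)
    have DG: "D \<subseteq> carrier G" by (auto simp: D_def K0_def)
    have "bij_betw (\<lambda>h. gr \<otimes> h) D W"
    proof (rule bij_betw_imageI)
      show "inj_on (\<lambda>h. gr \<otimes> h) D" using inj_on_cmult[OF grG] DG by (rule inj_on_subset)
      show "(\<lambda>h. gr \<otimes> h) ` D = W"
      proof
        show "(\<lambda>h. gr \<otimes> h) ` D \<subseteq> W"
        proof
          fix z assume "z \<in> (\<lambda>h. gr \<otimes> h) ` D"
          then obtain h where h: "h \<in> D" "z = gr \<otimes> h" by blast
          then have hG: "h \<in> carrier G" and hC: "h \<in> Cm r" and hs1: "sg h = 1" using DG by (auto simp: D_def K0_def)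
          have "gr \<otimes> h \<in> Xs r" by (rule iffD2[OF X_coset[OF gr hG] hC])
          moreover have "sg (gr \<otimes> h) = sg gr" using sg_mult[OF grG hG] hs1 by simp
          ultimately show "z \<in> W" using h by (simp add: W_def)
        qed
        show "W \<subseteq> (\<lambda>h. gr \<otimes> h) ` D"
        proof
          fix g assume g: "g \<in> W"
          then have gX: "g \<in> Xs r" and gsg: "sg g = sg gr" by (auto simp: W_def)
          have gG: "g \<in> carrier G" using gX X_sub by blast
          define h where "h = inv gr \<otimes> g"
          have hG: "h \<in> carrier G" using grG gG by (simp add: h_def)
          have gh: "g = gr \<otimes> h" using cancel1[OF grG gG] by (simp add: h_def)
          have "h \<in> Cm r" using iffD1[OF X_coset[OF gr hG]] gX gh by simp
          moreover have "sg h = 1"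
          proof -
            have "sg gr = sg gr * sg h" using gsg gh sg_mult[OF grG hG] by simp
            then show ?thesis using sg_pm[of gr] by auto
          qed
          ultimately have "h \<in> D" using hG by (simp add: D_def K0_def)
          then show "g \<in> (\<lambda>h. gr \<otimes> h) ` D" using gh by blast
        qed
      qed
    qed
    then have "card D = card W" by (rule bij_betw_same_card)
    then have "r dvd card D" using rW by simp
    then have "even (card D)" using evr by (rule dvd_trans[rotated])
    then show False using oD by simp
  qed
qed

end

theorem theorem6p1:
  fixes G :: "('g, 'b) monoid_scheme" and \<alpha> :: "'g \<Rightarrow> 'g" and r s :: nat and x y :: 'g
  assumes "group G" and "finite (carrier G)"
    and "\<alpha> \<in> Group.iso G G"
    and "r > 1" and "s > 1" and "coprime r s"
    and "x \<in> carrier G" and "y \<in> carrier G"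
    and "twisted_conj G \<alpha> r (twisted_norm G \<alpha> r x) (twisted_norm G \<alpha> r y)"
    and "twisted_conj G \<alpha> s (twisted_norm G \<alpha> s x) (twisted_norm G \<alpha> s y)"
    and "\<And>d. d dvd r \<Longrightarrow> d < r \<Longrightarrow> d > 0 \<Longrightarrow>
           \<not> twisted_conj G \<alpha> d (twisted_norm G \<alpha> d x) (twisted_norm G \<alpha> d y)"
    and "\<And>d. d dvd s \<Longrightarrow> d < s \<Longrightarrow> d > 0 \<Longrightarrow>
           \<not> twisted_conj G \<alpha> d (twisted_norm G \<alpha> d x) (twisted_norm G \<alpha> d y)"
  shows "r * s dvd order G \<and> order G \<noteq> r * s \<and>
         ((r * s) mod 4 = 2 \<longrightarrow> 2 * r * s dvd order G)"
proof -
  interpret tw G \<alpha> x y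
    by (rule tw.intro[OF assms(1)], unfold_locales) (use assms in simp_all)
  have tr: "twisted_conj G \<alpha> m (twisted_norm G \<alpha> m x) (twisted_norm G \<alpha> m y) \<longleftrightarrow> Xs m \<noteq> {}" for m
    using tc_iff[of m] by (auto simp: Xs_def)
  have hr: "Xs r \<noteq> {}" and hs: "Xs s \<noteq> {}" using assms(9,10) tr by simp_all
  have hdr: "Xs d = {}" if "d dvd r" "d < r" "0 < d" for d using assms(11)[OF that] tr by simp
  have hds: "Xs d = {}" if "d dvd s" "d < s" "0 < d" for d using assms(12)[OF that] tr by simp
  have p12: "r * s dvd order G \<and> order G \<noteq> r * s"
    by (rule main12[OF assms(4,5,6) hr hs hdr hds])
  have p3: "2 * r * s dvd order G" if rs4: "(r * s) mod 4 = 2"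
  proof -
    obtain k where k: "order G = r * s * k" using p12 by blast
    show ?thesis
    proof (cases "even k")
      case True
      then obtain j where "k = 2 * j" by blast
      then show ?thesis using k by (simp add: mult.commute mult.left_commute)
    next
      case False
      have "order G mod 4 = ((r * s) mod 4 * k) mod 4" using k by (simp add: mod_mult_left_eq)
      also have "\<dots> = (2 * k) mod 4" using rs4 by simp
      also have "\<dots> = 2" using False by presburger
      finally have ord4: "order G mod 4 = 2" .
      have evrs: "even (r * s)" using rs4 by presburger
      have notboth: "\<not> (even r \<and> even s)"
      proof
        assume "even r \<and> even s"
        then have "(2::nat) dvd gcd r s" by simp
        moreover have "gcd r s = 1" using assms(6) by (simp add: coprime_iff_gcd_eq_1)
        ultimately show False by simp
      qed
      show ?thesis
      proof (cases "even r")
        case True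
        then have "odd s" using notboth by blast
        then show ?thesis using main3[OF ord4 assms(4) True _ hr hs hdr] by blast
      next
        case False
        then have "even s" using evrs by simp
        then show ?thesis using main3[OF ord4 assms(5) _ False hs hr hds] by blast
      qed
    qed
  qed
  show ?thesis using p12 p3 by blast
qed

end
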